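(* Let $\Lambda=(\mathcal{L}\subset\mathbb{R}^s,\mathbb{R}^n)$ be a generic cut-and-project scheme with associated matrix $L$ and with self-similarity $A\in\mathbb{R}^{n\times n}$, and let $B\in\mathbb{R}^{(s-n)\times(s-n)}$ and $C\in\mathbb{Z}^{s\times s}$ satisfy $\begin{pmatrix}A&O\\O&B\end{pmatrix}L=LC$. Then for every polynomial $p\in\mathbb{Z}[X]$, $p(A)=O$ if and only if $p(B)=O$.
   Context: A lattice $\mathcal{L}\subset\mathbb{R}^s$ is $\{L\mathbf{r}:\mathbf{r}\in\mathbb{Z}^s\}$ for a non-singular $L\in\mathbb{R}^{s\times s}$. For $1\le n<s$ the scheme $(\mathcal{L}\subset\mathbb{R}^s,\mathbb{R}^n)$ has projections $\pi_\parallel(\mathbf{x})=(x_1,\dots,x_n)^\top$, $\pi_\perp(\mathbf{x})=(x_{n+1},\dots,x_s)^\top$; it is generic if $\pi_\parallel|_{\mathcal{L}}$, $\pi_\perp|_{\mathcal{L}}$ are injective and $\pi_\perp(\mathcal{L})$ is dense in $\mathbb{R}^{s-n}$. $A$ is a self-similarity of a generic scheme if $A\pi_\parallel(\mathcal{L})\subset\pi_\parallel(\mathcal{L})$ and there exist $C\in\mathbb{Z}^{s\times s}$, $B$ real with $\begin{pmatrix}A&O\\O&B\end{pmatrix}L=LC$. *)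

theory Defs
  imports "Jordan_Normal_Form.Matrix" "HOL-Computational_Algebra.Polynomial"
begin

definition lattice :: "nat \<Rightarrow> real mat \<Rightarrow> real vec set" where
  "lattice s L = {L *\<^sub>v vec s (\<lambda>i. real_of_int (z i)) | z. True}"

definition proj_par :: "nat \<Rightarrow> real vec \<Rightarrow> real vec" where
  "proj_par n x = vec n (\<lambda>i. x $ i)"

definition proj_perp :: "nat \<Rightarrow> nat \<Rightarrow> real vec \<Rightarrow> real vec" where
  "proj_perp s n x = vec (s - n) (\<lambda>i. x $ (n + i))"

definition vdist :: "nat \<Rightarrow> real vec \<Rightarrow> real vec \<Rightarrow> real" where
  "vdist m x y = sqrt (\<Sum>i<m. (x $ i - y $ i)\<^sup>2)"

definition dense_in :: "nat \<Rightarrow> real vec set \<Rightarrow> bool" where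
  "dense_in m S \<longleftrightarrow> (\<forall>y \<in> carrier_vec m. \<forall>e>0. \<exists>x\<in>S. vdist m x y < e)"

definition cp_scheme :: "nat \<Rightarrow> nat \<Rightarrow> real mat \<Rightarrow> bool" where
  "cp_scheme s n L \<longleftrightarrow> 1 \<le> n \<and> n < s \<and> L \<in> carrier_mat s s \<and> invertible_mat L"

definition generic_scheme :: "nat \<Rightarrow> nat \<Rightarrow> real mat \<Rightarrow> bool" where
  "generic_scheme s n L \<longleftrightarrow> cp_scheme s n L
     \<and> inj_on (proj_par n) (lattice s L)
     \<and> inj_on (proj_perp s n) (lattice s L)
     \<and> dense_in (s - n) (proj_perp s n ` lattice s L)"

definition self_sim_rel :: "nat \<Rightarrow> nat \<Rightarrow> real mat \<Rightarrow> real mat \<Rightarrow> real mat \<Rightarrow> int mat \<Rightarrow> bool" where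
  "self_sim_rel s n L A B C \<longleftrightarrow> B \<in> carrier_mat (s - n) (s - n) \<and> C \<in> carrier_mat s s \<and>
     four_block_mat A (0\<^sub>m n (s - n)) (0\<^sub>m (s - n) n) B * L = L * map_mat real_of_int C"

definition self_similarity :: "nat \<Rightarrow> nat \<Rightarrow> real mat \<Rightarrow> real mat \<Rightarrow> bool" where
  "self_similarity s n L A \<longleftrightarrow> generic_scheme s n L \<and> A \<in> carrier_mat n n
     \<and> (\<lambda>x. A *\<^sub>v x) ` proj_par n ` lattice s L \<subseteq> proj_par n ` lattice s L
     \<and> (\<exists>B C. self_sim_rel s n L A B C)"

definition mat_poly_eval :: "int poly \<Rightarrow> real mat \<Rightarrow> real mat" where
  "mat_poly_eval p M = foldr (\<lambda>i X. X + real_of_int (coeff p i) \<cdot>\<^sub>m (M ^\<^sub>m i))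
      [0..<Suc (degree p)] (0\<^sub>m (dim_row M) (dim_col M))"

end

theory Submission imports Defs begin

definition pe :: "int poly \<Rightarrow> nat list \<Rightarrow> real mat \<Rightarrow> real mat" where
  "pe p xs M = foldr (\<lambda>i X. X + real_of_int (coeff p i) \<cdot>\<^sub>m (M ^\<^sub>m i)) xs (0\<^sub>m (dim_row M) (dim_col M))"

lemma mpe: "mat_poly_eval p M = pe p [0..<Suc (degree p)] M"
  unfolding mat_poly_eval_def pe_def by simp

lemma pe_carrier: "M \<in> carrier_mat k k \<Longrightarrow> pe p xs M \<in> carrier_mat k k"
  by (induction xs) (auto simp: pe_def)

lemma pe_block:
  assumes A: "A \<in> carrier_mat n n" and B: "B \<in> carrier_mat m m"
  shows "pe p xs (four_block_mat A (0\<^sub>m n m) (0\<^sub>m m n) B) =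
    four_block_mat (pe p xs A) (0\<^sub>m n m) (0\<^sub>m m n) (pe p xs B)"
proof (induction xs)
  case Nil
  show ?case using A B unfolding pe_def by (intro eq_matI) auto
next
  case (Cons a xs)
  have cA: "pe p xs A \<in> carrier_mat n n" using pe_carrier[OF A] .
  have cB: "pe p xs B \<in> carrier_mat m m" using pe_carrier[OF B] .
  have "pe p (a # xs) (four_block_mat A (0\<^sub>m n m) (0\<^sub>m m n) B) =
     pe p xs (four_block_mat A (0\<^sub>m n m) (0\<^sub>m m n) B) + real_of_int (coeff p a) \<cdot>\<^sub>m 
      (four_block_mat A (0\<^sub>m n m) (0\<^sub>m m n) B ^\<^sub>m a)" by (simp add: pe_def)
  also have "\<dots> = four_block_mat (pe p xs A) (0\<^sub>m n m) (0\<^sub>m m n) (pe p xs B) +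
     four_block_mat (real_of_int (coeff p a) \<cdot>\<^sub>m A ^\<^sub>m a) (0\<^sub>m n m) (0\<^sub>m m n) (real_of_int (coeff p a) \<cdot>\<^sub>m B ^\<^sub>m a)"
    unfolding Cons pow_four_block_mat[OF A B]
    by (subst smult_four_block_mat) (use A B in auto)
  also have "\<dots> = four_block_mat (pe p (a#xs) A) (0\<^sub>m n m) (0\<^sub>m m n) (pe p (a#xs) B)"
    by (subst add_four_block_mat[OF cA _ _ cB]) (use A B in \<open>auto simp: pe_def\<close>)
  finally show ?case .
qed

lemma pow_intertwine:
  assumes D: "D \<in> carrier_mat s s" and L: "L \<in> carrier_mat s s" and C: "C \<in> carrier_mat s s"
    and e: "D * L = L * C"
  shows "D ^\<^sub>m k * L = L * C ^\<^sub>m k"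
proof (induction k)
  case 0 then show ?case using L D C by simp
next
  case (Suc k)
  have "D ^\<^sub>m Suc k * L = D ^\<^sub>m k * (D * L)" using D L by (simp add: assoc_mult_mat[of _ s s _ s _ s])
  also have "\<dots> = (D ^\<^sub>m k * L) * C" using D L C by (simp add: e assoc_mult_mat[of _ s s _ s _ s])
  also have "\<dots> = L * C ^\<^sub>m Suc k" using D L C by (simp add: Suc assoc_mult_mat[of _ s s _ s _ s])
  finally show ?case .
qed

lemma pe_intertwine:
  assumes D: "D \<in> carrier_mat s s" and L: "L \<in> carrier_mat s s" and C: "C \<in> carrier_mat s s"
    and e: "D * L = L * C"
  shows "pe p xs D * L = L * pe p xs C"
proof (induction xs)
  case Nil then show ?case using D L C by (simp add: pe_def)
next
  case (Cons a xs)
  have cD: "pe p xs D \<in> carrier_mat s s" using pe_carrier[OF D] .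
  have cC: "pe p xs C \<in> carrier_mat s s" using pe_carrier[OF C] .
  have "pe p (a#xs) D * L = pe p xs D * L + real_of_int (coeff p a) \<cdot>\<^sub>m (D ^\<^sub>m a * L)"
    using cD D L by (simp add: pe_def add_mult_distrib_mat[of _ s s _ _ s] mult_smult_assoc_mat[of _ s s _ s])
  also have "\<dots> = L * pe p xs C + real_of_int (coeff p a) \<cdot>\<^sub>m (L * C ^\<^sub>m a)"
    using pow_intertwine[OF D L C e] Cons by simp
  also have "\<dots> = L * pe p (a#xs) C"
    using cC C L by (simp add: pe_def mult_add_distrib_mat[of _ s s _ s] mult_smult_distrib[of _ s s _ s])
  finally show ?case .
qed

definition intm :: "real mat \<Rightarrow> bool" where
  "intm M \<longleftrightarrow> (\<forall>i<dim_row M. \<forall>j<dim_col M. M $$ (i,j) \<in> \<int>)"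

lemma intm_mult: "intm X \<Longrightarrow> intm Y \<Longrightarrow> dim_col X = dim_row Y \<Longrightarrow> intm (X * Y)"
  unfolding intm_def by (auto simp: scalar_prod_def row_def col_def intro!: Ints_sum Ints_mult)

lemma intm_pow: "M \<in> carrier_mat s s \<Longrightarrow> intm M \<Longrightarrow> intm (M ^\<^sub>m k)"
proof (induction k)
  case 0 then show ?case by (auto simp: intm_def one_mat_def)
next
  case (Suc k) then show ?case by (simp add: intm_mult)
qed

lemma intm_pe: "M \<in> carrier_mat s s \<Longrightarrow> intm M \<Longrightarrow> intm (pe p xs M)"
proof (induction xs)
  case Nil then show ?case by (auto simp: intm_def pe_def)
next
  case (Cons a xs)
  have "intm (M ^\<^sub>m a)" using intm_pow Cons by blast
  moreover have "pe p xs M \<in> carrier_mat s s" using pe_carrier Cons by blast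
  ultimately show ?case using Cons unfolding intm_def
    by (auto simp: pe_def intro!: Ints_add Ints_mult)
qed

lemma zero_from_cols:
  assumes P: "P \<in> carrier_mat s s" and L: "L \<in> carrier_mat s s" and inv: "invertible_mat L"
    and cols: "\<And>j. j < s \<Longrightarrow> col (P * L) j = 0\<^sub>v s"
  shows "P = 0\<^sub>m s s"
proof -
  have PL: "P * L = 0\<^sub>m s s"
    by (rule mat_col_eqI) (use P L cols in auto)
  obtain Li where "inverts_mat L Li" "inverts_mat Li L"
    using inv unfolding invertible_mat_def by blast
  then have LLi: "L * Li = 1\<^sub>m s" and LiL: "Li * L = 1\<^sub>m (dim_row Li)"
    using L unfolding inverts_mat_def by auto
  have "dim_col Li = s" using LLi L by (metis index_mult_mat(3) index_one_mat(3))
  moreover have "dim_row Li = s" using LiL L by (metis index_mult_mat(3) index_one_mat(3) carrier_matD(2))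
  ultimately have Li: "Li \<in> carrier_mat s s" by auto
  have "P = P * (L * Li)" using P by (simp add: LLi)
  also have "\<dots> = (P * L) * Li" using P L Li by simp
  also have "\<dots> = 0\<^sub>m s s" using Li by (simp add: PL)
  finally show ?thesis .
qed

theorem lemma1:
  fixes s n :: nat and L A B :: "real mat" and C :: "int mat" and p :: "int poly"
  assumes "generic_scheme s n L"
    and "self_similarity s n L A"
    and "self_sim_rel s n L A B C"
  shows "mat_poly_eval p A = 0\<^sub>m n n \<longleftrightarrow> mat_poly_eval p B = 0\<^sub>m (s - n) (s - n)"
proof -
  have ns: "n < s" and L: "L \<in> carrier_mat s s" and inv: "invertible_mat L"
    and injpar: "inj_on (proj_par n) (lattice s L)"
    and injperp: "inj_on (proj_perp s n) (lattice s L)"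
    using assms(1) unfolding generic_scheme_def cp_scheme_def by auto
  have A: "A \<in> carrier_mat n n" using assms(2) unfolding self_similarity_def by auto
  define D where "D = four_block_mat A (0\<^sub>m n (s - n)) (0\<^sub>m (s - n) n) B"
  define Cr where "Cr = map_mat real_of_int C"
  have B: "B \<in> carrier_mat (s-n) (s-n)" and C: "C \<in> carrier_mat s s" and e: "D * L = L * Cr"
    using assms(3) unfolding self_sim_rel_def D_def Cr_def by auto
  have Cr: "Cr \<in> carrier_mat s s" using C unfolding Cr_def by auto
  have D: "D \<in> carrier_mat s s" using A B ns unfolding D_def by auto
  define xs where "xs = [0..<Suc (degree p)]"
  define P where "P = pe p xs D"
  define Q where "Q = pe p xs Cr"
  define PA where "PA = pe p xs A"
  define PB where "PB = pe p xs B"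
  have PA: "PA \<in> carrier_mat n n" unfolding PA_def using pe_carrier[OF A] .
  have PB: "PB \<in> carrier_mat (s-n) (s-n)" unfolding PB_def using pe_carrier[OF B] .
  have Pc: "P \<in> carrier_mat s s" unfolding P_def using pe_carrier[OF D] .
  have Qc: "Q \<in> carrier_mat s s" unfolding Q_def using pe_carrier[OF Cr] .
  have Pblock: "P = four_block_mat PA (0\<^sub>m n (s - n)) (0\<^sub>m (s - n) n) PB"
    unfolding P_def PA_def PB_def D_def by (rule pe_block[OF A B])
  have PLQ: "P * L = L * Q" unfolding P_def Q_def by (rule pe_intertwine[OF D L Cr e])
  have intQ: "intm Q" unfolding Q_def
    by (rule intm_pe[OF Cr]) (auto simp: intm_def Cr_def)
  have inlat: "col (P * L) j \<in> lattice s L" if j: "j < s" for j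
  proof -
    define z where "z i = floor (Q $$ (i, j))" for i
    have "col Q j = vec s (\<lambda>i. real_of_int (z i))"
      using intQ Qc j unfolding intm_def z_def by (auto intro!: eq_vecI)
    moreover have "col (P * L) j = L *\<^sub>v col Q j" using col_mult2[OF L Qc j] PLQ by simp
    ultimately show ?thesis unfolding lattice_def by auto
  qed
  have zlat: "0\<^sub>v s \<in> lattice s L"
  proof -
    have "L *\<^sub>v vec s (\<lambda>i. real_of_int 0) = 0\<^sub>v s" using L by (auto intro!: eq_vecI simp: scalar_prod_def)
    then show ?thesis unfolding lattice_def
      by (intro CollectI exI[of _ "\<lambda>_. 0"]) simp
  qed
  have entry: "col (P * L) j $ i = row P i \<bullet> col L j" if "i < s" "j < s" for i j
    using that Pc L by simp
  have "PA = 0\<^sub>m n n \<longleftrightarrow> PB = 0\<^sub>m (s - n) (s - n)"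
  proof
    assume PA0: "PA = 0\<^sub>m n n"
    have rows: "row P i = 0\<^sub>v s" if "i < n" for i
      using that ns PA0 PA PB Pc unfolding Pblock by (auto intro!: eq_vecI)
    have "P = 0\<^sub>m s s"
    proof (rule zero_from_cols[OF Pc L inv])
      fix j assume j: "j < s"
      have "proj_par n (col (P * L) j) = proj_par n (0\<^sub>v s)"
        using entry j rows L ns unfolding proj_par_def by (auto intro!: eq_vecI)
      then show "col (P * L) j = 0\<^sub>v s"
        by (rule inj_onD[OF injpar _ inlat[OF j] zlat])
    qed
    then show "PB = 0\<^sub>m (s - n) (s - n)"
    proof -
      assume P0: "P = 0\<^sub>m s s"
      show ?thesis
      proof (rule eq_matI)
        fix i j assume "i < dim_row (0\<^sub>m (s - n) (s - n))" "j < dim_col (0\<^sub>m (s - n) (s - n))"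
        then have "P $$ (n + i, n + j) = PB $$ (i, j)" using PA PB ns unfolding Pblock by auto
        then show "PB $$ (i, j) = 0\<^sub>m (s - n) (s - n) $$ (i, j)"
          using P0 \<open>i < _\<close> \<open>j < _\<close> by auto
      qed (use PB in auto)
    qed
  next
    assume PB0: "PB = 0\<^sub>m (s - n) (s - n)"
    have rows: "row P (n + i) = 0\<^sub>v s" if "i < s - n" for i
      using that ns PB0 PA PB Pc unfolding Pblock by (auto intro!: eq_vecI)
    have "P = 0\<^sub>m s s"
    proof (rule zero_from_cols[OF Pc L inv])
      fix j assume j: "j < s"
      have "proj_perp s n (col (P * L) j) = proj_perp s n (0\<^sub>v s)"
        using entry j rows L ns unfolding proj_perp_def by (auto intro!: eq_vecI)
      then show "col (P * L) j = 0\<^sub>v s"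
        by (rule inj_onD[OF injperp _ inlat[OF j] zlat])
    qed
    then show "PA = 0\<^sub>m n n"
    proof -
      assume P0: "P = 0\<^sub>m s s"
      show ?thesis
      proof (rule eq_matI)
        fix i j assume "i < dim_row (0\<^sub>m n n)" "j < dim_col (0\<^sub>m n n)"
        then have "P $$ (i, j) = PA $$ (i, j)" using PA PB ns unfolding Pblock by auto
        then show "PA $$ (i, j) = 0\<^sub>m n n $$ (i, j)"
          using P0 \<open>i < _\<close> \<open>j < _\<close> ns by auto
      qed (use PA in auto)
    qed
  qed
  then show ?thesis unfolding mpe PA_def PB_def xs_def .
qed

end
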